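(* Let $A$ be a set of vertices in a Johnson graph $J(m,k)$ that is shattered by the edge relation, and assume $|A|\ge 4$. Then there do not exist three vertices in $A$ that are pairwise at distance $2$ from each other.
   Context: For $m\ge k$ and a set $X$ with $|X|=m$, the Johnson graph $J(m,k)$ has as vertices the $k$-element subsets of $X$, two vertices adjacent iff their symmetric difference has size $2$. $N(v)$ is the set of vertices adjacent to $v$ and $d$ is graph distance. A set $A$ of vertices of a graph $G$ is shattered by the edge relation if $\{A\cap N(w)\mid w\in V(G)\}$ is the full power set of $A$. *)

theory Defs
  imports Main "HOL-Library.Extended_Nat"
begin

text \<open>Johnson graph J(m,k) on a ground set X with card X = m:
  vertices are the k-element subsets of X, adjacent iff the symmetric
  difference has exactly 2 elements.\<close>

definition johnson_vertices :: "'a set \<Rightarrow> nat \<Rightarrow> 'a set set" where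
  "johnson_vertices X k = {S. S \<subseteq> X \<and> card S = k}"

definition johnson_adj :: "'a set \<Rightarrow> 'a set \<Rightarrow> bool" where
  "johnson_adj S T \<longleftrightarrow> card ((S - T) \<union> (T - S)) = 2"

definition nbhd :: "'v set \<Rightarrow> ('v \<Rightarrow> 'v \<Rightarrow> bool) \<Rightarrow> 'v \<Rightarrow> 'v set" where
  "nbhd V E v = {w \<in> V. E v w}"

definition is_walk :: "'v set \<Rightarrow> ('v \<Rightarrow> 'v \<Rightarrow> bool) \<Rightarrow> 'v list \<Rightarrow> 'v \<Rightarrow> 'v \<Rightarrow> nat \<Rightarrow> bool" where
  "is_walk V E p u v n \<longleftrightarrow> length p = Suc n \<and> hd p = u \<and> last p = v \<and> set p \<subseteq> V
     \<and> (\<forall>i<n. E (p ! i) (p ! Suc i))"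

text \<open>Graph distance (infinity if no walk exists).\<close>
definition gdist :: "'v set \<Rightarrow> ('v \<Rightarrow> 'v \<Rightarrow> bool) \<Rightarrow> 'v \<Rightarrow> 'v \<Rightarrow> enat" where
  "gdist V E u v = Inf {enat n | n. \<exists>p. is_walk V E p u v n}"

definition shattered :: "'v set \<Rightarrow> ('v \<Rightarrow> 'v \<Rightarrow> bool) \<Rightarrow> 'v set \<Rightarrow> bool" where
  "shattered V E A \<longleftrightarrow> {A \<inter> nbhd V E w | w. w \<in> V} = Pow A"

end

theory Submission
  imports Defs
begin

lemma diff_card_eq:
  assumes "finite S" "finite T" "card S = card T"
  shows "card (S - T) = card (T - S)"
proof -
  have "card S = card (S \<inter> T) + card (S - T)"
    using assms(1) by (rule card_Int_Diff)
  moreover have "card T = card (S \<inter> T) + card (T - S)"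
    using assms(2) by (metis Int_commute card_Int_Diff)
  ultimately show ?thesis using assms by simp
qed

lemma adj_iff:
  assumes "finite S" "finite T" "card S = card T"
  shows "johnson_adj S T \<longleftrightarrow> card (S - T) = 1"
proof -
  have "card ((S - T) \<union> (T - S)) = card (S - T) + card (T - S)"
    by (rule card_Un_disjoint) (use assms in auto)
  then show ?thesis unfolding johnson_adj_def using diff_card_eq[OF assms] by linarith
qed

lemma common_nbr:
  assumes fin: "finite u" "finite v" "finite z"
    and c: "card u = k" "card v = k" "card z = k"
    and uv: "card (u - v) = 2" and zu: "card (z - u) = 1" and zv: "card (z - v) = 1"
  shows "u \<inter> v \<subseteq> z \<and> z \<subseteq> u \<union> v"
proof -
  have cu: "card u = card (u \<inter> v) + card (u - v)"
    using fin by (simp add: card_Int_Diff)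
  have czu: "card z = card (z \<inter> u) + card (z - u)"
    using fin by (simp add: card_Int_Diff)
  have czv: "card z = card (z \<inter> v) + card (z - v)"
    using fin by (simp add: card_Int_Diff)
  have un: "card (z \<inter> u) + card (z \<inter> v) = card ((z \<inter> u) \<union> (z \<inter> v)) + card ((z \<inter> u) \<inter> (z \<inter> v))"
    using fin by (intro card_Un_Int) auto
  have s1: "card ((z \<inter> u) \<union> (z \<inter> v)) \<le> card z"
    using fin by (intro card_mono) auto
  have s2: "card ((z \<inter> u) \<inter> (z \<inter> v)) \<le> card (u \<inter> v)"
    using fin by (intro card_mono) auto
  have e1: "card ((z \<inter> u) \<union> (z \<inter> v)) = card z"
    using cu czu czv un s1 s2 c uv zu zv by linarith
  have e2: "card ((z \<inter> u) \<inter> (z \<inter> v)) = card (u \<inter> v)"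
    using cu czu czv un s1 s2 c uv zu zv by linarith
  have "(z \<inter> u) \<union> (z \<inter> v) = z"
    using fin e1 by (metis card_subset_eq Int_lower1 Un_least)
  moreover have "(z \<inter> u) \<inter> (z \<inter> v) = u \<inter> v"
    using fin e2 by (intro card_subset_eq) auto
  ultimately show ?thesis by blast
qed

lemma gdist2:
  assumes "gdist V E u v = 2" "u \<in> V"
  shows "u \<noteq> v \<and> \<not> E u v \<and> (\<exists>z\<in>V. E u z \<and> E z v) \<and> v \<in> V"
proof -
  let ?S = "{enat n | n. \<exists>p. is_walk V E p u v n}"
  have ne: "?S \<noteq> {}" using assms(1) unfolding gdist_def by (auto simp: Inf_enat_def split: if_splits)
  have "Inf ?S \<in> ?S"
  proof -
    obtain x where x: "x \<in> ?S" using ne by blast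
    have "(LEAST x. x \<in> ?S) \<in> ?S" using x by (rule LeastI)
    then show ?thesis using ne by (simp only: Inf_enat_def if_False)
  qed
  then have "2 \<in> ?S" using assms(1) unfolding gdist_def by simp
  then obtain n p where n: "(2::enat) = enat n" and p0: "is_walk V E p u v n"
    by blast
  from n have "n = 2" by (metis enat_numeral enat.inject)
  with p0 have p: "is_walk V E p u v 2" by simp
  have low: "2 \<le> n" if "n \<in> ?S" for n
  proof -
    have "Inf ?S \<le> n" using that by (rule Inf_lower)
    then show "2 \<le> n" using assms(1) unfolding gdist_def by simp
  qed
  have "u \<noteq> v"
  proof
    assume "u = v"
    then have "is_walk V E [u] u v 0" using assms(2) unfolding is_walk_def by auto
    then have "enat 0 \<in> ?S" by blast
    from low[OF this] show False by (simp add: zero_enat_def[symmetric])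
  qed
  moreover have "\<not> E u v"
  proof
    assume "E u v"
    have "p \<noteq> []" "last p = v" "set p \<subseteq> V" using p unfolding is_walk_def by auto
    then have "v \<in> V" using last_in_set by blast
    then have "is_walk V E [u, v] u v 1" using assms(2) \<open>E u v\<close> unfolding is_walk_def by auto
    then have "enat 1 \<in> ?S" by blast
    from low[OF this] show False by (simp add: one_enat_def[symmetric])
  qed
  moreover have "\<exists>z\<in>V. E u z \<and> E z v \<and> v \<in> V"
  proof -
    from p have l: "length p = 3" and h: "hd p = u" and la: "last p = v" and s: "set p \<subseteq> V"
      and e: "\<forall>i<2. E (p ! i) (p ! Suc i)" unfolding is_walk_def by auto
    have "p \<noteq> []" using l by auto
    then have "p ! 0 = u" using h by (simp add: hd_conv_nth)
    moreover have "p ! 2 = v"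
    proof -
      have "last p = p ! (length p - 1)" using \<open>p \<noteq> []\<close> by (rule last_conv_nth)
      then show ?thesis using la l by simp
    qed
    moreover have "p ! 1 \<in> V" "p ! 2 \<in> V" using s l by (auto simp: nth_mem subset_iff)
    moreover have "E (p ! 0) (p ! 1)" using e by simp
    moreover have "E (p ! 1) (p ! 2)" using e[rule_format, of 1] by (simp add: numeral_2_eq_2)
    ultimately show ?thesis by auto
  qed
  ultimately show ?thesis by blast
qed


lemma dist2_card:
  assumes X: "finite X" and uV: "u \<in> johnson_vertices X k" and vV: "v \<in> johnson_vertices X k"
    and g: "gdist (johnson_vertices X k) johnson_adj u v = 2"
  shows "card (u - v) = 2"
proof -
  let ?V = "johnson_vertices X k"
  have fu: "finite u" "card u = k" using uV X unfolding johnson_vertices_def by (auto intro: finite_subset)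
  have fv: "finite v" "card v = k" using vV X unfolding johnson_vertices_def by (auto intro: finite_subset)
  from gdist2[OF g uV] obtain z where ne: "u \<noteq> v" and na: "\<not> johnson_adj u v" and zV: "z \<in> ?V"
    and a1: "johnson_adj u z" and a2: "johnson_adj z v" by blast
  have fz: "finite z" "card z = k" using zV X unfolding johnson_vertices_def by (auto intro: finite_subset)
  have c1: "card (u - z) = 1" using a1 adj_iff fu fz by metis
  have c2: "card (z - v) = 1" using a2 adj_iff fv fz by metis
  have "u - v \<subseteq> (u - z) \<union> (z - v)" by blast
  then have "card (u - v) \<le> card ((u - z) \<union> (z - v))" using fu fz by (intro card_mono) auto
  also have "\<dots> \<le> card (u - z) + card (z - v)" by (rule card_Un_le)
  finally have le: "card (u - v) \<le> 2" using c1 c2 by simp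
  have n1: "card (u - v) \<noteq> 1" using na adj_iff fu fv by metis
  have n0: "card (u - v) \<noteq> 0"
  proof
    assume "card (u - v) = 0"
    then have "u \<subseteq> v" using fu by auto
    then have "u = v" using fu fv by (metis card_subset_eq)
    with ne show False by simp
  qed
  from le n1 n0 show ?thesis by linarith
qed

theorem mainTheorem6:
  fixes X :: "'a set" and m k :: nat and A :: "'a set set"
  assumes "finite X" and "card X = m" and "k \<le> m"
    and "A \<subseteq> johnson_vertices X k"
    and "shattered (johnson_vertices X k) johnson_adj A"
    and "card A \<ge> 4"
  shows "\<not> (\<exists>u\<in>A. \<exists>v\<in>A. \<exists>w\<in>A.
            gdist (johnson_vertices X k) johnson_adj u v = 2 \<and>
            gdist (johnson_vertices X k) johnson_adj v w = 2 \<and>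
            gdist (johnson_vertices X k) johnson_adj u w = 2)"
proof
  let ?V = "johnson_vertices X k"
  assume "\<exists>u\<in>A. \<exists>v\<in>A. \<exists>w\<in>A. gdist ?V johnson_adj u v = 2 \<and>
            gdist ?V johnson_adj v w = 2 \<and> gdist ?V johnson_adj u w = 2"
  then obtain u v w where uA: "u \<in> A" and vA: "v \<in> A" and wA: "w \<in> A"
    and g1: "gdist ?V johnson_adj u v = 2" and g2: "gdist ?V johnson_adj v w = 2"
    and g3: "gdist ?V johnson_adj u w = 2" by blast
  have inV: "\<And>x. x \<in> A \<Longrightarrow> x \<in> ?V" using assms(4) by blast
  have finV: "\<And>x. x \<in> ?V \<Longrightarrow> finite x \<and> card x = k"
    using assms(1) unfolding johnson_vertices_def by (auto intro: finite_subset)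
  have uv: "card (u - v) = 2" using dist2_card[OF assms(1) inV inV g1] uA vA by simp
  have vw: "card (v - w) = 2" using dist2_card[OF assms(1) inV inV g2] vA wA by simp
  have uw: "card (u - w) = 2" using dist2_card[OF assms(1) inV inV g3] uA wA by simp
  have finA: "finite A" using assms(6) by (metis card.infinite not_numeral_le_zero)
  have c3: "card {u, v, w} \<le> 3" by (simp add: card_insert_le_m1)
  have "\<not> A \<subseteq> {u, v, w}"
  proof
    assume "A \<subseteq> {u, v, w}"
    then have "card A \<le> card {u, v, w}" by (intro card_mono) auto
    with c3 assms(6) show False by linarith
  qed
  then have "A - {u, v, w} \<noteq> {}" by blast
  then obtain x where xA: "x \<in> A" and xu: "x \<notin> {u, v, w}" by blast
  have sh: "{A \<inter> nbhd ?V johnson_adj z | z. z \<in> ?V} = Pow A"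
    using assms(5) unfolding shattered_def .
  have "A \<in> {A \<inter> nbhd ?V johnson_adj z | z. z \<in> ?V}" using sh by simp
  then obtain z1 where z1V: "z1 \<in> ?V" and z1: "A \<inter> nbhd ?V johnson_adj z1 = A"
    by blast
  have "A - {x} \<in> {A \<inter> nbhd ?V johnson_adj z | z. z \<in> ?V}" using sh by simp
  then obtain z2 where z2V: "z2 \<in> ?V" and z2: "A \<inter> nbhd ?V johnson_adj z2 = A - {x}"
    by blast
  have adj1: "\<And>y. y \<in> A \<Longrightarrow> johnson_adj z1 y" using z1 unfolding nbhd_def by blast
  have adj2: "\<And>y. y \<in> A \<Longrightarrow> y \<noteq> x \<Longrightarrow> johnson_adj z2 y" using z2 unfolding nbhd_def by blast
  have nadj: "\<not> johnson_adj z2 x"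
  proof
    assume "johnson_adj z2 x"
    then have "x \<in> A \<inter> nbhd ?V johnson_adj z2" using xA inV[OF xA] unfolding nbhd_def by simp
    then show False using z2 by simp
  qed
  have key: "\<And>z. z \<in> ?V \<Longrightarrow> johnson_adj z u \<Longrightarrow> johnson_adj z v \<Longrightarrow> johnson_adj z w \<Longrightarrow>
      z = (u \<inter> v) \<union> (v \<inter> w) \<union> (u \<inter> w)"
  proof -
    fix z assume zV: "z \<in> ?V" and a: "johnson_adj z u" "johnson_adj z v" "johnson_adj z w"
    have fz: "finite z" "card z = k" using finV zV by auto
    have fu: "finite u" "card u = k" using finV inV uA by auto
    have fv: "finite v" "card v = k" using finV inV vA by auto
    have fw: "finite w" "card w = k" using finV inV wA by auto
    have zu: "card (z - u) = 1" using a(1) adj_iff[OF fz(1) fu(1)] fz(2) fu(2) by simp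
    have zv: "card (z - v) = 1" using a(2) adj_iff[OF fz(1) fv(1)] fz(2) fv(2) by simp
    have zw: "card (z - w) = 1" using a(3) adj_iff[OF fz(1) fw(1)] fz(2) fw(2) by simp
    have A1: "u \<inter> v \<subseteq> z \<and> z \<subseteq> u \<union> v" by (rule common_nbr[OF fu(1) fv(1) fz(1) fu(2) fv(2) fz(2) uv zu zv])
    have A2: "v \<inter> w \<subseteq> z \<and> z \<subseteq> v \<union> w" by (rule common_nbr[OF fv(1) fw(1) fz(1) fv(2) fw(2) fz(2) vw zv zw])
    have A3: "u \<inter> w \<subseteq> z \<and> z \<subseteq> u \<union> w" by (rule common_nbr[OF fu(1) fw(1) fz(1) fu(2) fw(2) fz(2) uw zu zw])
    show "z = (u \<inter> v) \<union> (v \<inter> w) \<union> (u \<inter> w)" using A1 A2 A3 by blast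
  qed
  have "z1 = z2"
    using key[OF z1V adj1[OF uA] adj1[OF vA] adj1[OF wA]]
          key[OF z2V adj2[OF uA] adj2[OF vA] adj2[OF wA]] xu by auto
  then show False using adj1[OF xA] nadj by simp
qed

end
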